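(* Let $\mathcal I$ be a decreasing information set of length $n=2^m$ and let $M$ be an $m\times m$ upper-triangular binary matrix such that $\pi=\varphi(M)$ is an automorphism of $C(\mathcal I)$. For $i\in\{0,1\}$ let $\mathcal I_i=\mathcal I(\mathrm{Ind}_m(a_m=i))$ (an information set of length $2^{m-1}$), and let $\pi'=\varphi(M([1,m-1],[1,m-1]))$, a permutation of $\{0,\dots,2^{m-1}-1\}$. If $\pi$ commutes with $\mathrm{SC}_{\mathcal I}$, then $\pi'$ commutes with both $\mathrm{SC}_{\mathcal I_1}$ and $\mathrm{SC}_{\mathcal I_0}$.
   Context: Setup. Let $m\ge 1$, $n=2^m$. For any $k\ge1$, each index $z\in\{0,\dots,2^k-1\}$ is identified with the vector $a(z)=(a_1,\dots,a_k)^T\in\mathbb F_2^k$ determined by $z=\sum_{i=1}^k 2^{i-1}(1-a_i)$ (i.e. $a$ is the binary expansion of $2^k-1-z$, $a_1$ least significant), and with the monomial $x_1^{a_1}\cdots x_k^{a_k}$. Let $F=\begin{bmatrix}1&0\\1&1\end{bmatrix}$, $G_k=F^{\otimes k}$ with rows indexed $0,\dots,2^k-1$. For an information set $\mathcal I\subseteq\{0,\dots,2^k-1\}$ (equivalently a subset of $\mathbb F_2^k$), $C(\mathcal I)$ is the binary code spanned by the rows of $G_k$ with index in $\mathcal I$, and $\mathcal F$ is the complement of $\mathcal I$. Partial order on monomials: for monomials of equal degree, $x_{i_1}\cdots x_{i_t}\preccurlyeq x_{j_1}\cdots x_{j_t}$ (with $i_1<\dots<i_t$, $j_1<\dots<j_t$)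 iff $i_l\le j_l$ for all $l$; in general $f\preccurlyeq g$ iff $f\preccurlyeq g'$ for some divisor $g'$ of $g$ of the same degree as $f$. $\mathcal I$ is decreasing if $f\in\mathcal I$ and $g\preccurlyeq f$ imply $g\in\mathcal I$. A permutation $\pi$ of indices acts on vectors by $\pi(c)=(c_{\pi(0)},\dots,c_{\pi(N-1)})$; it is an automorphism of a code $C$ if $\pi(C)=C$. For $N\in GL_k(\mathbb F_2)$, $\varphi(N)$ is the permutation of $\{0,\dots,2^k-1\}$ sending $z$ to the index $z'$ with $a(z')=Na(z)$. A binary matrix $M$ is upper-triangular if $M(i,i)=1$ and $M(i,j)=0$ for $j<i$. $M([a,b],[c,d])$ is the submatrix with rows $a..b$ and columns $c..d$. SC decoding (length $2^k$). Let $f(x,y)=\log\frac{e^{x+y}+1}{e^x+e^y}$ and $g(u,x,y)=(-1)^ux+y$. The map $\mathrm{SC}_{\mathcal I}:\mathbb R^{2^k}\to\mathbb F_2^{2^k}$: given $y$ put $L_{i,k}=y_i$. For $0\le t<k$ and each $i$ with $\lfloor i/2^t\rfloor$ even: $L_{i,t}=f(L_{i,t+1},L_{i+2^t,t+1})$, $L_{i+2^t,t}=g(u_{i,t},L_{i,t+1},L_{i+2^t,t+1})$, $u_{i,t+1}=u_{i,t}\oplus u_{i+2^t,t}$, $u_{i+2^t,t+1}=u_{i+2^t,t}$. At stage $0$, $u_{i,0}=0$ if $i\in\mathcal F$ or $L_{i,0}\ge 0$, and $1$ otherwise. Quantities are computed in successive-cancellation order (stage-0 decisions for $i=0,1,\dots$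 in increasing order, each quantity computed once its inputs are available). The output is $(u_{i,k})_i$. A permutation $\pi$ commutes with $\mathrm{SC}_{\mathcal I}$ if $\mathrm{SC}_{\mathcal I}(\pi(y))=\pi(\mathrm{SC}_{\mathcal I}(y))$ for all $y$. Subcodes. For $i_1<\dots<i_t$ in $\{1,\dots,m\}$ and $c_{i_j}\in\mathbb F_2$, $\mathrm{Ind}_m(a_{i_1}=c_{i_1},\dots,a_{i_t}=c_{i_t})=\{a\in\mathbb F_2^m: a_{i_j}=c_{i_j}\ \forall j\}$. For such a set $A$, $\mathcal I(A)\subseteq\mathbb F_2^{m-t}$ is the set of vectors obtained from the elements of $\mathcal I\cap A$ by deleting coordinates $i_1,\dots,i_t$, regarded as an information set of length $2^{m-t}$. *)

theory Defs
  imports "HOL-Analysis.Analysis"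
begin

(* Vectors in F_2^k are functions nat => bool, coordinates 1..k (False outside).
   a(z): a_i = 1 - (bit i-1 of z), i.e. a is the binary expansion of 2^k-1-z. *)
definition avec :: "nat \<Rightarrow> nat \<Rightarrow> (nat \<Rightarrow> bool)" where
  "avec k z = (\<lambda>i. i \<in> {1..k} \<and> \<not> bit z (i - 1))"

definition index_of :: "nat \<Rightarrow> (nat \<Rightarrow> bool) \<Rightarrow> nat" where
  "index_of k a = (\<Sum>i=1..k. 2 ^ (i - 1) * (if a i then 0 else 1))"

(* the monomial x^a(z) as the set of its variables *)
definition supp :: "nat \<Rightarrow> nat \<Rightarrow> nat set" where
  "supp k z = {i \<in> {1..k}. avec k z i}"

(* partial order on (squarefree) monomials, given as sets of variable indices;
   divisors of a monomial correspond to subsets *)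
definition mono_le :: "nat set \<Rightarrow> nat set \<Rightarrow> bool" where
  "mono_le S T = (\<exists>T' \<subseteq> T. card T' = card S \<and>
      (\<forall>l < card S. sorted_list_of_set S ! l \<le> sorted_list_of_set T' ! l))"

definition info_set :: "nat \<Rightarrow> nat set \<Rightarrow> bool" where
  "info_set k I = (I \<subseteq> {..<2^k})"

definition decreasing :: "nat \<Rightarrow> nat set \<Rightarrow> bool" where
  "decreasing k I = (\<forall>z \<in> I. \<forall>w < 2^k. mono_le (supp k w) (supp k z) \<longrightarrow> w \<in> I)"

(* F = [[1,0],[1,1]] *)
definition Fker :: "nat \<Rightarrow> nat \<Rightarrow> bool" where
  "Fker a b = (b \<le> a)"

(* G_k = F^{\<otimes>k}, G_{k+1} = F \<otimes> G_k *)
fun Gk :: "nat \<Rightarrow> nat \<Rightarrow> nat \<Rightarrow> bool" where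
  "Gk 0 r c = True"
| "Gk (Suc k) r c = (Fker (r div 2^k) (c div 2^k) \<and> Gk k (r mod 2^k) (c mod 2^k))"

(* C(I): the F_2-span of the rows of G_k with index in I *)
definition code :: "nat \<Rightarrow> nat set \<Rightarrow> (nat \<Rightarrow> bool) set" where
  "code k I = {c. \<exists>u. (\<forall>r. u r \<longrightarrow> r \<in> I) \<and>
      c = (\<lambda>j. j < 2^k \<and> odd (card {r \<in> {..<2^k}. u r \<and> Gk k r j}))}"

definition perm_vec :: "nat \<Rightarrow> (nat \<Rightarrow> nat) \<Rightarrow> (nat \<Rightarrow> 'a) \<Rightarrow> (nat \<Rightarrow> 'a)" where
  "perm_vec N p c = (\<lambda>i. if i < N then c (p i) else c i)"

definition is_automorphism :: "nat \<Rightarrow> (nat \<Rightarrow> nat) \<Rightarrow> (nat \<Rightarrow> bool) set \<Rightarrow> bool" where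
  "is_automorphism N p C = (perm_vec N p ` C = C)"

(* matrices over F_2 as nat => nat => bool, rows/columns indexed 1..k *)
definition matvec :: "nat \<Rightarrow> (nat \<Rightarrow> nat \<Rightarrow> bool) \<Rightarrow> (nat \<Rightarrow> bool) \<Rightarrow> (nat \<Rightarrow> bool)" where
  "matvec k N a = (\<lambda>i. i \<in> {1..k} \<and> odd (card {j \<in> {1..k}. N i j \<and> a j}))"

definition phi :: "nat \<Rightarrow> (nat \<Rightarrow> nat \<Rightarrow> bool) \<Rightarrow> nat \<Rightarrow> nat" where
  "phi k N z = index_of k (matvec k N (avec k z))"

definition upper_triangular :: "nat \<Rightarrow> (nat \<Rightarrow> nat \<Rightarrow> bool) \<Rightarrow> bool" where
  "upper_triangular k M = (\<forall>i \<in> {1..k}. M i i \<and> (\<forall>j \<in> {1..k}. j < i \<longrightarrow> \<not> M i j))"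

(* I(Ind_m(a_m = c)): elements of I with a_m = c, coordinate m deleted *)
definition sub_info :: "nat \<Rightarrow> nat set \<Rightarrow> bool \<Rightarrow> nat set" where
  "sub_info m I c = {index_of (m - 1) (avec m z) | z. z \<in> I \<and> avec m z m = c}"

definition sc_f :: "real \<Rightarrow> real \<Rightarrow> real" where
  "sc_f x y = ln ((exp (x + y) + 1) / (exp x + exp y))"

definition sc_g :: "bool \<Rightarrow> real \<Rightarrow> real \<Rightarrow> real" where
  "sc_g u x y = (if u then - x else x) + y"

(* L i t = L_{i,t},  u i t = u_{i,t} (True = 1); all equations of the SC schedule *)
definition sc_system :: "nat \<Rightarrow> nat set \<Rightarrow> (nat \<Rightarrow> real) \<Rightarrow>
    (nat \<Rightarrow> nat \<Rightarrow> real) \<Rightarrow> (nat \<Rightarrow> nat \<Rightarrow> bool) \<Rightarrow> bool" where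
  "sc_system k I y L u =
     ((\<forall>i < 2^k. L i k = y i) \<and>
      (\<forall>t < k. \<forall>i < 2^k. even (i div 2^t) \<longrightarrow>
          L i t = sc_f (L i (t+1)) (L (i + 2^t) (t+1)) \<and>
          L (i + 2^t) t = sc_g (u i t) (L i (t+1)) (L (i + 2^t) (t+1)) \<and>
          u i (t+1) = (u i t \<noteq> u (i + 2^t) t) \<and>
          u (i + 2^t) (t+1) = u (i + 2^t) t) \<and>
      (\<forall>i < 2^k. u i 0 = (i \<in> I \<and> L i 0 < 0)))"

(* SC_I(y) = (u_{i,k})_i; the quantities are uniquely determined by the schedule *)
definition SC :: "nat \<Rightarrow> nat set \<Rightarrow> (nat \<Rightarrow> real) \<Rightarrow> (nat \<Rightarrow> bool)" where
  "SC k I y = (\<lambda>i. i < 2^k \<and> (THE b. \<exists>L u. sc_system k I y L u \<and> u i k = b))"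

definition commutes_SC :: "nat \<Rightarrow> nat set \<Rightarrow> (nat \<Rightarrow> nat) \<Rightarrow> bool" where
  "commutes_SC k I p = (\<forall>y. SC k I (perm_vec (2^k) p y) = perm_vec (2^k) p (SC k I y))"

end

theory Submission
  imports Defs
begin


definition Iup :: "nat \<Rightarrow> nat set \<Rightarrow> nat set" where
  "Iup k I = {j. j + 2^k \<in> I}"

lemma div_shift: "t < k \<Longrightarrow> (i + 2^k) div (2::nat)^t = i div 2^t + 2^(k-t)"
proof -
  assume "t < k"
  then have "(2::nat)^k = 2^(k-t) * 2^t" by (simp add: power_add[symmetric])
  then show ?thesis by simp
qed

lemma even_shift: "t < k \<Longrightarrow> even ((i + 2^k) div (2::nat)^t) = even (i div 2^t)"
  by (simp add: div_shift)

lemma add_pow_lt: "t < k \<Longrightarrow> i < 2^k \<Longrightarrow> even (i div (2::nat)^t) \<Longrightarrow> i + 2^t < 2^k"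
proof -
  assume a: "t < k" "i < 2^k" "even (i div (2::nat)^t)"
  have e: "(2::nat)^k = 2^(k-t) * 2^t" using a(1) by (simp add: power_add[symmetric])
  have "i div 2^t < 2^(k-t)" using a(2) e by (simp add: less_mult_imp_div_less)
  moreover have "even ((2::nat)^(k-t))" using a(1) by simp
  ultimately have h: "i div 2^t + 1 < 2^(k-t)" using a(3)
    by (metis dvd_add_right_iff le_neq_implies_less odd_one Suc_eq_plus1 Suc_leI)
  have d: "(i + 2^t) div 2^t = i div 2^t + 1" by simp
  have pos: "(0::nat) < 2^t" by simp
  have "(i + 2^t) div 2^t < 2^(k-t)" using d h by simp
  hence "i + 2^t < 2^(k-t) * 2^t" by (rule iffD1[OF div_less_iff_less_mult[OF pos]])
  thus ?thesis using e by linarith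
qed

lemma sys_cong:
  "(\<forall>i<2^k. y i = y' i) \<Longrightarrow> (\<forall>i<2^k. i\<in>I \<longleftrightarrow> i\<in>I') \<Longrightarrow>
   sc_system k I y L u = sc_system k I' y' L u"
  unfolding sc_system_def by auto

lemma sysD:
  assumes "sc_system k I y L u" "t < k" "i < 2^k" "even (i div 2^t)"
  shows "L i t = sc_f (L i (t+1)) (L (i + 2^t) (t+1))"
    "L (i + 2^t) t = sc_g (u i t) (L i (t+1)) (L (i + 2^t) (t+1))"
    "u i (t+1) = (u i t \<noteq> u (i + 2^t) t)"
    "u (i + 2^t) (t+1) = u (i + 2^t) t"
proof -
  have H: "\<forall>t < k. \<forall>i < 2^k. even (i div 2^t) \<longrightarrow>
          L i t = sc_f (L i (t+1)) (L (i + 2^t) (t+1)) \<and>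
          L (i + 2^t) t = sc_g (u i t) (L i (t+1)) (L (i + 2^t) (t+1)) \<and>
          u i (t+1) = (u i t \<noteq> u (i + 2^t) t) \<and>
          u (i + 2^t) (t+1) = u (i + 2^t) t"
    using assms(1) unfolding sc_system_def by (rule conjunct1[OF conjunct2])
  note X = H[rule_format, OF assms(2,3,4)]
  show "L i t = sc_f (L i (t+1)) (L (i + 2^t) (t+1))"
    "L (i + 2^t) t = sc_g (u i t) (L i (t+1)) (L (i + 2^t) (t+1))"
    "u i (t+1) = (u i t \<noteq> u (i + 2^t) t)"
    "u (i + 2^t) (t+1) = u (i + 2^t) t" using X by simp_all
qed

lemma sysY: "sc_system k I y L u \<Longrightarrow> i < 2^k \<Longrightarrow> L i k = y i"
  unfolding sc_system_def by blast

lemma sys0: "sc_system k I y L u \<Longrightarrow> i < 2^k \<Longrightarrow> u i 0 = (i \<in> I \<and> L i 0 < 0)"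
  unfolding sc_system_def by blast

lemma sysI:
  assumes "\<And>i. i < 2^k \<Longrightarrow> L i k = y i"
    and "\<And>t i. t < k \<Longrightarrow> i < 2^k \<Longrightarrow> even (i div 2^t) \<Longrightarrow>
          L i t = sc_f (L i (t+1)) (L (i + 2^t) (t+1)) \<and>
          L (i + 2^t) t = sc_g (u i t) (L i (t+1)) (L (i + 2^t) (t+1)) \<and>
          u i (t+1) = (u i t \<noteq> u (i + 2^t) t) \<and>
          u (i + 2^t) (t+1) = u (i + 2^t) t"
    and "\<And>i. i < 2^k \<Longrightarrow> u i 0 = (i \<in> I \<and> L i 0 < 0)"
  shows "sc_system k I y L u"
  unfolding sc_system_def using assms by blast

lemma sys_low: "sc_system (Suc k) I y L u \<Longrightarrow> sc_system k I (\<lambda>i. L i k) L u"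
proof (rule sysI)
  fix t i :: nat assume S: "sc_system (Suc k) I y L u" and a: "t < k" "i < 2^k" "even (i div 2^t)"
  have b: "t < Suc k" "i < 2^Suc k" using a by auto
  show "L i t = sc_f (L i (t+1)) (L (i + 2^t) (t+1)) \<and>
          L (i + 2^t) t = sc_g (u i t) (L i (t+1)) (L (i + 2^t) (t+1)) \<and>
          u i (t+1) = (u i t \<noteq> u (i + 2^t) t) \<and>
          u (i + 2^t) (t+1) = u (i + 2^t) t"
    using sysD[OF S b a(3)] by blast
next
  fix i :: nat assume S: "sc_system (Suc k) I y L u" and a: "i < 2^k"
  show "u i 0 = (i \<in> I \<and> L i 0 < 0)" using sys0[OF S] a by simp
qed simp

lemma sys_up: "sc_system (Suc k) I y L u \<Longrightarrow>
  sc_system k (Iup k I) (\<lambda>i. L (i+2^k) k) (\<lambda>i t. L (i+2^k) t) (\<lambda>i t. u (i+2^k) t)"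
proof (rule sysI)
  fix t i :: nat assume S: "sc_system (Suc k) I y L u" and a: "t < k" "i < 2^k" "even (i div 2^t)"
  have b: "t < Suc k" "i + 2^k < 2^Suc k" "even ((i + 2^k) div 2^t)"
    using a even_shift[OF a(1)] by auto
  have c: "i + 2^k + 2^t = i + 2^t + 2^k" by simp
  show "L (i + 2 ^ k) t = sc_f (L (i + 2 ^ k) (t + 1)) (L (i + 2 ^ t + 2 ^ k) (t + 1)) \<and>
        L (i + 2 ^ t + 2 ^ k) t = sc_g (u (i + 2 ^ k) t) (L (i + 2 ^ k) (t + 1)) (L (i + 2 ^ t + 2 ^ k) (t + 1)) \<and>
        u (i + 2 ^ k) (t + 1) = (u (i + 2 ^ k) t \<noteq> u (i + 2 ^ t + 2 ^ k) t) \<and>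
        u (i + 2 ^ t + 2 ^ k) (t + 1) = u (i + 2 ^ t + 2 ^ k) t"
    using sysD[OF S b] unfolding c by blast
next
  fix i :: nat assume S: "sc_system (Suc k) I y L u" and a: "i < 2^k"
  have b: "i + 2^k < 2^Suc k" using a by simp
  show "u (i + 2 ^ k) 0 = (i \<in> Iup k I \<and> L (i + 2 ^ k) 0 < 0)"
    using sys0[OF S b] unfolding Iup_def by simp
qed simp

lemma sys_top:
  assumes S: "sc_system (Suc k) I y L u" and i: "i < 2^k"
  shows "L i k = sc_f (y i) (y (i+2^k))"
    "L (i+2^k) k = sc_g (u i k) (y i) (y (i+2^k))"
    "u i (Suc k) = (u i k \<noteq> u (i+2^k) k)"
    "u (i+2^k) (Suc k) = u (i+2^k) k"
proof -
  have b: "k < Suc k" "i < 2^Suc k" "i + 2^k < 2^Suc k" "even (i div 2^k)" using i by auto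
  have y: "L i (Suc k) = y i" "L (i+2^k) (Suc k) = y (i+2^k)" using sysY[OF S] b by auto
  note E = sysD[OF S b(1,2,4)]
  show "L i k = sc_f (y i) (y (i+2^k))"
    "L (i+2^k) k = sc_g (u i k) (y i) (y (i+2^k))"
    "u i (Suc k) = (u i k \<noteq> u (i+2^k) k)"
    "u (i+2^k) (Suc k) = u (i+2^k) k" using E y by simp_all
qed



lemma sys_unique:
  "sc_system k I y L u \<Longrightarrow> sc_system k I y L' u' \<Longrightarrow> i < 2^k \<Longrightarrow> u i k = u' i k"
proof (induction k arbitrary: I y L u L' u' i)
  case 0
  then show ?case using sys0[OF 0(1)] sys0[OF 0(2)] sysY[OF 0(1)] sysY[OF 0(2)] by simp
next
  case (Suc k)
  have l1: "sc_system k I (\<lambda>j. sc_f (y j) (y (j+2^k))) L u"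
    using sys_low[OF Suc.prems(1)] sys_cong[of k "\<lambda>j. L j k" "\<lambda>j. sc_f (y j) (y (j+2^k))" I I L u]
      sys_top(1)[OF Suc.prems(1)] by simp
  have l2: "sc_system k I (\<lambda>j. sc_f (y j) (y (j+2^k))) L' u'"
    using sys_low[OF Suc.prems(2)] sys_cong[of k "\<lambda>j. L' j k" "\<lambda>j. sc_f (y j) (y (j+2^k))" I I L' u']
      sys_top(1)[OF Suc.prems(2)] by simp
  have lo: "\<forall>j<2^k. u j k = u' j k" using Suc.IH[OF l1 l2] by blast
  have u1: "sc_system k (Iup k I) (\<lambda>j. sc_g (u j k) (y j) (y (j+2^k))) (\<lambda>i t. L (i+2^k) t) (\<lambda>i t. u (i+2^k) t)"
    using sys_up[OF Suc.prems(1)] sys_cong[of k "\<lambda>j. L (j+2^k) k" "\<lambda>j. sc_g (u j k) (y j) (y (j+2^k))" "Iup k I" "Iup k I" "\<lambda>i t. L (i+2^k) t" "\<lambda>i t. u (i+2^k) t"]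
      sys_top(2)[OF Suc.prems(1)] by simp
  have u2: "sc_system k (Iup k I) (\<lambda>j. sc_g (u j k) (y j) (y (j+2^k))) (\<lambda>i t. L' (i+2^k) t) (\<lambda>i t. u' (i+2^k) t)"
    using sys_up[OF Suc.prems(2)] sys_cong[of k "\<lambda>j. L' (j+2^k) k" "\<lambda>j. sc_g (u j k) (y j) (y (j+2^k))" "Iup k I" "Iup k I" "\<lambda>i t. L' (i+2^k) t" "\<lambda>i t. u' (i+2^k) t"]
      sys_top(2)[OF Suc.prems(2)] lo by simp
  have hi: "\<forall>j<2^k. u (j+2^k) k = u' (j+2^k) k" using Suc.IH[OF u1 u2] by blast
  show ?case
  proof (cases "i < 2^k")
    case True
    then show ?thesis using sys_top(3)[OF Suc.prems(1) True] sys_top(3)[OF Suc.prems(2) True] lo hi by simp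
  next
    case False
    define j where "j = i - 2^k"
    have j: "i = j + 2^k" "j < 2^k" using Suc.prems(3) False unfolding j_def by auto
    show ?thesis using sys_top(4)[OF Suc.prems(1) j(2)] sys_top(4)[OF Suc.prems(2) j(2)] hi j by simp
  qed
qed

lemma sys_exists: "\<exists>L u. sc_system k I y L u"
proof (induction k arbitrary: I y)
  case 0
  have "sc_system 0 I y (\<lambda>i t. y i) (\<lambda>i t. i \<in> I \<and> y i < 0)"
    by (rule sysI) auto
  then show ?case by blast
next
  case (Suc k)
  obtain L1 u1 where S1: "sc_system k I (\<lambda>j. sc_f (y j) (y (j+2^k))) L1 u1" using Suc.IH by blast
  obtain L2 u2 where S2: "sc_system k (Iup k I) (\<lambda>j. sc_g (u1 j k) (y j) (y (j+2^k))) L2 u2" using Suc.IH by blast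
  define L where "L = (\<lambda>i t. if t = Suc k then y i else if i < 2^k then L1 i t else L2 (i - 2^k) t)"
  define u where "u = (\<lambda>i t. if t = Suc k then (if i < 2^k then u1 i k \<noteq> u2 i k else u2 (i - 2^k) k)
                           else if i < 2^k then u1 i t else u2 (i - 2^k) t)"
  have "sc_system (Suc k) I y L u"
  proof (rule sysI)
    fix i :: nat assume "i < 2^Suc k" then show "L i (Suc k) = y i" unfolding L_def by simp
  next
    fix i :: nat assume a: "i < 2^Suc k"
    show "u i 0 = (i \<in> I \<and> L i 0 < 0)"
    proof (cases "i < 2^k")
      case True then show ?thesis unfolding u_def L_def using sys0[OF S1 True] by simp
    next
      case False
      then have "i - 2^k < 2^k" using a by auto
      then show ?thesis unfolding u_def L_def using sys0[OF S2] False unfolding Iup_def by simp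
    qed
  next
    fix t i :: nat assume a: "t < Suc k" "i < 2^Suc k" "even (i div 2^t)"
    show "L i t = sc_f (L i (t+1)) (L (i + 2^t) (t+1)) \<and>
          L (i + 2^t) t = sc_g (u i t) (L i (t+1)) (L (i + 2^t) (t+1)) \<and>
          u i (t+1) = (u i t \<noteq> u (i + 2^t) t) \<and>
          u (i + 2^t) (t+1) = u (i + 2^t) t"
    proof (cases "t = k")
      case True
      have ik: "i < 2^k"
      proof (rule ccontr)
        assume "\<not> i < 2^k"
        then have j: "i = (i - 2^k) + 2^k" "i - 2^k < 2^k" using a(2) by auto
        have "(i - 2^k + 2^k) div 2^k = (i - 2^k) div 2^k + 1" by simp
        then have "i div 2^k = 1" using j by simp
        then show False using a(3) True by simp
      qed
      have ik2: "i + 2^k \<ge> 2^k" "\<not> i + 2^k < 2^k" by auto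
      show ?thesis unfolding True L_def u_def using ik ik2 sysY[OF S1 ik] sysY[OF S2 ik] by simp
    next
      case False
      then have tk: "t < k" using a(1) by simp
      show ?thesis
      proof (cases "i < 2^k")
        case True
        have i2: "i + 2^t < 2^k" using add_pow_lt[OF tk True a(3)] .
        note E = sysD[OF S1 tk True a(3)]
        show ?thesis unfolding L_def u_def using tk True i2 E by simp
      next
        case False
        define j where "j = i - 2^k"
        have j: "i = j + 2^k" "j < 2^k" using a(2) False unfolding j_def by auto
        have ej: "even (j div 2^t)" using a(3) even_shift[OF tk, of j] j(1) by simp
        have c: "i + 2^t - 2^k = j + 2^t" "\<not> i + 2^t < 2^k" using j by auto
        note E = sysD[OF S2 tk j(2) ej]
        show ?thesis unfolding L_def u_def using tk False c E j by simp
      qed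
    qed
  qed
  then show ?case by blast
qed



lemma SC_eq: "sc_system k I y L u \<Longrightarrow> i < 2^k \<Longrightarrow> SC k I y i = u i k"
  unfolding SC_def
proof (simp, rule the_equality)
  assume S: "sc_system k I y L u" and i: "i < 2^k"
  show "\<exists>L' u'. sc_system k I y L' u' \<and> u' i k = u i k" using S by blast
  fix b assume "\<exists>L' u'. sc_system k I y L' u' \<and> u' i k = b"
  then obtain L' u' where "sc_system k I y L' u'" "u' i k = b" by blast
  then show "b = u i k" using sys_unique[OF S _ i] by metis
qed

lemma SC_ge: "\<not> i < 2^k \<Longrightarrow> \<not> SC k I y i"
  unfolding SC_def by simp

lemma SC_cong:
  assumes "\<forall>i<2^k. y i = y' i" "\<forall>i<2^k. i\<in>I \<longleftrightarrow> i\<in>I'"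
  shows "SC k I y = SC k I' y'"
proof
  fix i
  obtain L u where S: "sc_system k I y L u" using sys_exists by blast
  have S': "sc_system k I' y' L u" using S sys_cong[OF assms] by simp
  show "SC k I y i = SC k I' y' i"
    by (cases "i < 2^k") (simp_all add: SC_eq[OF S] SC_eq[OF S'] SC_ge)
qed

definition ylow :: "nat \<Rightarrow> (nat \<Rightarrow> real) \<Rightarrow> nat \<Rightarrow> real" where
  "ylow k y = (\<lambda>j. sc_f (y j) (y (j+2^k)))"

definition yup :: "nat \<Rightarrow> nat set \<Rightarrow> (nat \<Rightarrow> real) \<Rightarrow> nat \<Rightarrow> real" where
  "yup k I y = (\<lambda>j. sc_g (SC k I (ylow k y) j) (y j) (y (j+2^k)))"

lemma SC_decomp:
  assumes i: "i < 2^k"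
  shows "SC (Suc k) I y i = (SC k I (ylow k y) i \<noteq> SC k (Iup k I) (yup k I y) i)"
    "SC (Suc k) I y (i + 2^k) = SC k (Iup k I) (yup k I y) i"
proof -
  obtain L u where S: "sc_system (Suc k) I y L u" using sys_exists by blast
  have l1: "sc_system k I (ylow k y) L u"
    using sys_low[OF S] sys_cong[of k "\<lambda>j. L j k" "ylow k y" I I L u]
      sys_top(1)[OF S] unfolding ylow_def by simp
  have lo: "\<forall>j<2^k. SC k I (ylow k y) j = u j k" using SC_eq[OF l1] by blast
  have u1: "sc_system k (Iup k I) (yup k I y) (\<lambda>i t. L (i+2^k) t) (\<lambda>i t. u (i+2^k) t)"
    using sys_up[OF S] sys_cong[of k "\<lambda>j. L (j+2^k) k" "yup k I y" "Iup k I" "Iup k I" "\<lambda>i t. L (i+2^k) t" "\<lambda>i t. u (i+2^k) t"]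
      sys_top(2)[OF S] lo unfolding yup_def by simp
  have hi: "\<forall>j<2^k. SC k (Iup k I) (yup k I y) j = u (j+2^k) k" using SC_eq[OF u1] by blast
  have i2: "i < 2^Suc k" "i + 2^k < 2^Suc k" using i by auto
  show "SC (Suc k) I y i = (SC k I (ylow k y) i \<noteq> SC k (Iup k I) (yup k I y) i)"
    using SC_eq[OF S i2(1)] sys_top(3)[OF S i] lo hi i by simp
  show "SC (Suc k) I y (i + 2^k) = SC k (Iup k I) (yup k I y) i"
    using SC_eq[OF S i2(2)] sys_top(4)[OF S i] hi i by simp
qed

lemma SC_base: "SC 0 I y 0 = (0 \<in> I \<and> y 0 < 0)"
proof -
  have S: "sc_system 0 I y (\<lambda>i t. y i) (\<lambda>i t. i \<in> I \<and> y i < 0)"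
    by (rule sysI) auto
  show ?thesis using SC_eq[OF S] by simp
qed

lemma sc_f_0: "sc_f 0 x = 0"
  unfolding sc_f_def by (simp add: add.commute)

lemma SC_zero: "\<not> SC k I (\<lambda>_. 0) i"
proof -
  have S: "sc_system k I (\<lambda>_. 0) (\<lambda>i t. 0) (\<lambda>i t. False)"
    by (rule sysI) (auto simp: sc_f_0 sc_g_def)
  show ?thesis by (cases "i < 2^k") (simp_all add: SC_eq[OF S] SC_ge)
qed



lemma sc_f_sign:
  assumes "x \<noteq> 0" "y \<noteq> 0"
  shows "sc_f x y \<noteq> 0" "sc_f x y < 0 \<longleftrightarrow> ((x < 0) \<noteq> (y < 0))"
proof -
  define Q where "Q = (exp (x + y) + 1) / (exp x + exp y)"
  have den: "exp x + exp y > 0" by (simp add: add_pos_pos)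
  have Qp: "Q > 0" unfolding Q_def using den by (simp add: add_pos_pos)
  have key: "exp (x+y) + 1 - (exp x + exp y) = (exp x - 1) * (exp y - 1)"
    by (simp add: exp_add algebra_simps)
  have sx: "exp x - 1 < 0 \<longleftrightarrow> x < 0" "exp x - 1 \<noteq> 0" using assms(1) by auto
  have sy: "exp y - 1 < 0 \<longleftrightarrow> y < 0" "exp y - 1 \<noteq> 0" using assms(2) by auto
  have "Q < 1 \<longleftrightarrow> exp (x+y) + 1 < exp x + exp y"
    unfolding Q_def using den by (simp add: divide_less_eq)
  hence Q1: "Q < 1 \<longleftrightarrow> (exp x - 1) * (exp y - 1) < 0" using key by linarith
  have Q2: "Q \<noteq> 1"
  proof
    assume "Q = 1"
    then have "exp (x + y) + 1 = exp x + exp y" unfolding Q_def using den by (simp add: divide_eq_eq)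
    then have "(exp x - 1) * (exp y - 1) = 0" using key by simp
    then show False using sx sy by simp
  qed
  have f: "sc_f x y = ln Q" unfolding sc_f_def Q_def ..
  show "sc_f x y \<noteq> 0" unfolding f using Qp Q2 by simp
  have "sc_f x y < 0 \<longleftrightarrow> Q < 1" unfolding f using Qp by simp
  also have "\<dots> \<longleftrightarrow> (exp x - 1) * (exp y - 1) < 0" by (rule Q1)
  also have "\<dots> \<longleftrightarrow> ((x < 0) \<noteq> (y < 0))" using sx sy
    by (auto simp: mult_less_0_iff)
  finally show "sc_f x y < 0 \<longleftrightarrow> ((x < 0) \<noteq> (y < 0))" .
qed

lemma sign_transfer:
  "(\<forall>i<2^k. i\<in>J \<longrightarrow> i\<in>J') \<Longrightarrow> (\<forall>i<2^k. x i \<noteq> 0 \<and> (x i < 0 \<longleftrightarrow> SC k J w i)) \<Longrightarrow>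
   i < 2^k \<Longrightarrow> SC k J' x i = SC k J w i"
proof (induction k arbitrary: J J' w x i)
  case 0
  then have i: "i = 0" by simp
  have h1: "x 0 \<noteq> 0" "x 0 < 0 \<longleftrightarrow> (0 \<in> J \<and> w 0 < 0)" using 0(2) SC_base[of J w] by auto
  have h2: "0 \<in> J \<longrightarrow> 0 \<in> J'" using 0(1) by simp
  show ?case unfolding i SC_base using h1 h2 by auto
next
  case (Suc k)
  define a where "a = SC k J (ylow k w)"
  define b where "b = SC k (Iup k J) (yup k J w)"
  have W1: "\<And>j. j < 2^k \<Longrightarrow> SC (Suc k) J w j = (a j \<noteq> b j)" using SC_decomp(1) unfolding a_def b_def by blast
  have W2: "\<And>j. j < 2^k \<Longrightarrow> SC (Suc k) J w (j + 2^k) = b j" using SC_decomp(2) unfolding b_def by blast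
  have X1: "\<And>j. j < 2^k \<Longrightarrow> x j \<noteq> 0 \<and> (x j < 0 \<longleftrightarrow> (a j \<noteq> b j))"
  proof -
    fix j :: nat assume j: "j < 2^k"
    then have "j < 2^Suc k" by simp
    then show "x j \<noteq> 0 \<and> (x j < 0 \<longleftrightarrow> (a j \<noteq> b j))" using Suc.prems(2) W1[OF j] by metis
  qed
  have X2: "\<And>j. j < 2^k \<Longrightarrow> x (j+2^k) \<noteq> 0 \<and> (x (j+2^k) < 0 \<longleftrightarrow> b j)"
  proof -
    fix j :: nat assume j: "j < 2^k"
    then have "j + 2^k < 2^Suc k" by simp
    then show "x (j+2^k) \<noteq> 0 \<and> (x (j+2^k) < 0 \<longleftrightarrow> b j)" using Suc.prems(2) W2[OF j] by metis
  qed
  have sub1: "\<forall>i<2^k. i\<in>J \<longrightarrow> i\<in>J'" using Suc.prems(1) by simp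
  have sl: "\<forall>j<2^k. ylow k x j \<noteq> 0 \<and> (ylow k x j < 0 \<longleftrightarrow> SC k J (ylow k w) j)"
  proof (intro allI impI)
    fix j :: nat assume j: "j < 2^k"
    show "ylow k x j \<noteq> 0 \<and> (ylow k x j < 0 \<longleftrightarrow> SC k J (ylow k w) j)"
    proof -
      have e1: "ylow k x j = sc_f (x j) (x (j+2^k))" by (simp add: ylow_def)
      have e2: "SC k J (ylow k w) j = a j" by (simp add: a_def)
      show ?thesis unfolding e1 e2 using sc_f_sign[of "x j" "x (j+2^k)"] X1[OF j] X2[OF j] by auto
    qed
  qed
  have A: "\<And>j. j < 2^k \<Longrightarrow> SC k J' (ylow k x) j = a j"
    using Suc.IH[OF sub1 sl] unfolding a_def by blast
  have sub2: "\<forall>i<2^k. i\<in>Iup k J \<longrightarrow> i\<in>Iup k J'" using Suc.prems(1) unfolding Iup_def by simp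
  have su: "\<forall>j<2^k. yup k J' x j \<noteq> 0 \<and> (yup k J' x j < 0 \<longleftrightarrow> SC k (Iup k J) (yup k J w) j)"
  proof (intro allI impI)
    fix j :: nat assume j: "j < 2^k"
    show "yup k J' x j \<noteq> 0 \<and> (yup k J' x j < 0 \<longleftrightarrow> SC k (Iup k J) (yup k J w) j)"
    proof -
      have e1: "yup k J' x j = sc_g (a j) (x j) (x (j+2^k))" by (simp add: yup_def A[OF j])
      have e2: "SC k (Iup k J) (yup k J w) j = b j" by (simp add: b_def)
      show ?thesis unfolding e1 e2 sc_g_def using X1[OF j] X2[OF j] by (cases "a j"; cases "b j") auto
    qed
  qed
  have B: "\<And>j. j < 2^k \<Longrightarrow> SC k (Iup k J') (yup k J' x) j = b j"
    using Suc.IH[OF sub2 su] unfolding b_def by blast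
  show ?case
  proof (cases "i < 2^k")
    case True
    then show ?thesis using SC_decomp(1)[OF True, of J' x] A B W1 by simp
  next
    case False
    define j where "j = i - 2^k"
    have j: "i = j + 2^k" "j < 2^k" using Suc.prems(3) False unfolding j_def by auto
    show ?thesis unfolding j(1) using SC_decomp(2)[OF j(2), of J' x] B W2 j(2) by simp
  qed
qed



lemma inv_f_single:
  fixes w C :: real
  assumes h: "\<bar>w\<bar> \<le> C - 1"
  shows "sc_f C (ln ((exp (w + C) - 1) / (exp C - exp w))) = w"
    "\<bar>ln ((exp (w + C) - 1) / (exp C - exp w))\<bar> < C"
proof -
  define A where "A = exp C"
  define W where "W = exp w"
  have e2: "2 < exp (1::real)"
  proof -
    have "exp (ln 2) < exp (1::real)" using ln_2_less_1 by (simp only: exp_less_cancel_iff)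
    then show ?thesis by simp
  qed
  have Ap: "A > 0" "W > 0" unfolding A_def W_def by auto
  have h1: "w + 1 \<le> C" "1 - w \<le> C" using h by (auto simp: abs_le_iff)
  have "exp (w + 1) \<le> exp C" using h1(1) by (simp only: exp_le_cancel_iff)
  hence "exp 1 * W \<le> A" unfolding A_def W_def by (simp add: exp_add mult.commute)
  moreover have "exp 1 * W > 2 * W" using e2 Ap(2) by simp
  ultimately have AW: "A > 2 * W" by linarith
  have "exp 1 \<le> exp (C + w)" using h1(2) by (simp only: exp_le_cancel_iff)
  hence "exp 1 \<le> A * W" unfolding A_def W_def by (simp add: exp_add)
  hence AW2: "A * W > 2" using e2 by linarith
  define R where "R = (A * W - 1) / (A - W)"
  have N: "A * W - 1 > 0" using AW2 by simp
  have D: "A - W > 0" using AW Ap by simp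
  have Rp: "R > 0" unfolding R_def using N D by simp
  have RD: "R * (A - W) = A * W - 1" unfolding R_def using D by simp
  have eq: "(exp (w + C) - 1) / (exp C - exp w) = R" unfolding R_def A_def W_def by (simp add: exp_add mult.commute)
  have er: "exp (ln R) = R" using Rp by simp
  have "sc_f C (ln R) = ln ((A * R + 1) / (A + R))"
    unfolding sc_f_def A_def using er by (simp add: exp_add)
  also have "(A * R + 1) / (A + R) = W"
  proof -
    have pos: "A + R > 0" using Ap Rp by simp
    have x1: "A * R + 1 - W * (A + R) = R * (A - W) + 1 - A * W" by (simp add: algebra_simps)
    have "A * R + 1 = W * (A + R)" using x1 RD by linarith
    then show ?thesis using pos by (simp add: divide_eq_eq)
  qed
  finally show "sc_f C (ln ((exp (w + C) - 1) / (exp C - exp w))) = w"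
    unfolding eq W_def by simp
  have r1: "R < A"
  proof -
    have p: "A * (A - 2 * W) > 0" using AW Ap by simp
    have x2: "A * (A - W) = A * (A - 2 * W) + A * W" by (simp add: algebra_simps)
    have "A * W - 1 < A * (A - W)" using p x2 by linarith
    then show ?thesis unfolding R_def using D by (simp add: divide_less_eq)
  qed
  have r2: "1 / A < R"
  proof -
    have x3: "A * (A * W - 1) = A * (A * W) - A" by (simp add: algebra_simps)
    have "A * (A * W) > A * 2" using AW2 Ap by simp
    hence "A - W < A * (A * W - 1)" using x3 Ap by linarith
    hence "(A - W) / A < A * W - 1" using Ap by (simp add: divide_less_eq mult.commute)
    hence "1 / A * (A - W) < A * W - 1" by simp
    then show ?thesis unfolding R_def using D by (simp add: less_divide_eq)
  qed
  have "ln R < ln A" using r1 Rp by simp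
  hence "ln R < C" unfolding A_def by simp
  moreover have "- C < ln R"
  proof -
    have "ln (1 / A) < ln R" using r2 Ap Rp by simp
    then show ?thesis unfolding A_def by (simp add: ln_div)
  qed
  ultimately show "\<bar>ln ((exp (w + C) - 1) / (exp C - exp w))\<bar> < C" unfolding eq by simp
qed

lemma inv_f:
  fixes w :: "nat \<Rightarrow> real"
  shows "\<exists>C r. C > 0 \<and> (\<forall>i<2^k. sc_f C (r i) = w i \<and> \<bar>r i\<bar> < C)"
proof -
  define C where "C = (\<Sum>i<(2::nat)^k. \<bar>w i\<bar>) + 1"
  have hb: "\<And>i. i < 2^k \<Longrightarrow> \<bar>w i\<bar> \<le> C - 1"
  proof -
    fix i :: nat assume "i < 2^k"
    then have "\<bar>w i\<bar> \<le> (\<Sum>i<(2::nat)^k. \<bar>w i\<bar>)"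
      by (intro member_le_sum) auto
    then show "\<bar>w i\<bar> \<le> C - 1" unfolding C_def by simp
  qed
  have "C > 0" unfolding C_def by (simp add: add_nonneg_pos sum_nonneg)
  then show ?thesis
    by (intro exI[of _ C] exI[of _ "\<lambda>i. ln ((exp (w i + C) - 1) / (exp C - exp (w i)))"])
       (simp add: inv_f_single[OF hb])
qed



lemma index_of_Suc: "index_of (Suc k) a = index_of k a + 2^k * (if a (Suc k) then 0 else 1)"
  unfolding index_of_def by simp

lemma index_of_lt: "index_of k a < 2^k"
proof (induction k)
  case 0 then show ?case unfolding index_of_def by simp
next
  case (Suc k) then show ?case unfolding index_of_Suc by auto
qed

lemma index_of_cong: "(\<And>i. i \<in> {1..k} \<Longrightarrow> a i = b i) \<Longrightarrow> index_of k a = index_of k b"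
  unfolding index_of_def by (rule sum.cong) auto

lemma matvec_cong: "(\<And>i. i \<in> {1..k} \<Longrightarrow> a i = b i) \<Longrightarrow> matvec k M a = matvec k M b"
proof -
  assume h: "\<And>i. i \<in> {1..k} \<Longrightarrow> a i = b i"
  have "\<And>i. {j \<in> {1..k}. M i j \<and> a j} = {j \<in> {1..k}. M i j \<and> b j}" using h by auto
  then show ?thesis unfolding matvec_def by simp
qed

lemma matvec_last:
  assumes "upper_triangular (Suc k) M"
  shows "matvec (Suc k) M a (Suc k) = a (Suc k)"
proof -
  have u1: "M (Suc k) (Suc k)" using assms unfolding upper_triangular_def by simp
  have u2: "\<And>j. j \<in> {1..Suc k} \<Longrightarrow> j < Suc k \<Longrightarrow> \<not> M (Suc k) j"
    using assms unfolding upper_triangular_def by simp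
  have "{j \<in> {1..Suc k}. M (Suc k) j \<and> a j} = (if a (Suc k) then {Suc k} else {})"
  proof (rule set_eqI)
    fix j
    show "j \<in> {j \<in> {1..Suc k}. M (Suc k) j \<and> a j} \<longleftrightarrow> j \<in> (if a (Suc k) then {Suc k} else {})"
      using u1 u2[of j] by (cases "j = Suc k") auto
  qed
  then show ?thesis unfolding matvec_def by simp
qed

lemma matvec_drop:
  assumes "\<not> a (Suc k)" "i \<in> {1..k}"
  shows "matvec (Suc k) M a i = matvec k M a i"
proof -
  have "{j \<in> {1..Suc k}. M i j \<and> a j} = {j \<in> {1..k}. M i j \<and> a j}"
    using assms(1) by (auto simp: le_Suc_eq)
  then show ?thesis unfolding matvec_def using assms(2) by simp
qed

lemma bit_shift_low: "n < k \<Longrightarrow> bit ((i::nat) + 2^k) n = bit i n"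
  by (simp add: bit_iff_odd div_shift)

lemma bit_shift_top: "(i::nat) < 2^k \<Longrightarrow> bit (i + 2^k) k"
proof -
  assume "i < 2^k"
  then have "(i + 2^k) div 2^k = 1" by simp
  then show ?thesis by (simp add: bit_iff_odd)
qed

lemma bit_low_top: "(i::nat) < 2^k \<Longrightarrow> \<not> bit i k"
  by (simp add: bit_iff_odd)

lemma phi_low:
  assumes "upper_triangular (Suc k) M" "z < 2^k"
  shows "phi (Suc k) M z < 2^k"
proof -
  have a: "avec (Suc k) z (Suc k)" unfolding avec_def using bit_low_top[OF assms(2)] by simp
  have "matvec (Suc k) M (avec (Suc k) z) (Suc k)" using matvec_last[OF assms(1)] a by simp
  then show ?thesis unfolding phi_def index_of_Suc using index_of_lt by simp
qed

lemma phi_high: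
  assumes "upper_triangular (Suc k) M" "i < 2^k"
  shows "phi (Suc k) M (i + 2^k) = phi k M i + 2^k"
proof -
  define a where "a = avec (Suc k) (i + 2^k)"
  have a1: "\<not> a (Suc k)" unfolding a_def avec_def using bit_shift_top[OF assms(2)] by simp
  have a2: "\<And>j. j \<in> {1..k} \<Longrightarrow> a j = avec k i j"
    unfolding a_def avec_def using bit_shift_low by auto
  have b1: "\<not> matvec (Suc k) M a (Suc k)" using matvec_last[OF assms(1)] a1 by simp
  have "index_of k (matvec (Suc k) M a) = index_of k (matvec k M (avec k i))"
  proof (rule index_of_cong)
    fix j assume j: "j \<in> {1..k}"
    show "matvec (Suc k) M a j = matvec k M (avec k i) j"
      using matvec_drop[of a k j M, OF a1 j] matvec_cong[of k a "avec k i" M] a2 by simp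
  qed
  then show ?thesis unfolding phi_def a_def[symmetric] index_of_Suc using b1 by simp
qed

lemma phi_lt: "phi k M i < 2^k"
  unfolding phi_def by (rule index_of_lt)

lemma index_avec: "k \<le> m \<Longrightarrow> index_of k (avec m z) = z mod 2^k"
proof (induction k)
  case 0 then show ?case unfolding index_of_def by simp
next
  case (Suc k)
  have e: "z mod (2 * 2^k) = z mod 2^k + 2^k * (z div 2^k mod 2)"
    using mod_mult2_eq'[of z "2^k" 2] by (simp add: mult.commute)
  have av: "avec m z (Suc k) = (z div 2^k mod 2 = 0)" unfolding avec_def using Suc.prems
    by (simp add: bit_iff_odd even_iff_mod_2_eq_zero)
  have ih: "index_of k (avec m z) = z mod 2^k" using Suc by simp
  show ?case unfolding index_of_Suc ih av
    by (cases "z div 2^k mod 2 = 0") (auto simp: e mod2_eq_if)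
qed

lemma sub_info_True:
  assumes "info_set (Suc k) I" "i < 2^k"
  shows "i \<in> sub_info (Suc k) I True \<longleftrightarrow> i \<in> I"
proof
  assume "i \<in> sub_info (Suc k) I True"
  then obtain z where z: "i = index_of k (avec (Suc k) z)" "z \<in> I" "avec (Suc k) z (Suc k)"
    unfolding sub_info_def by auto
  have "\<not> bit z k" using z(3) unfolding avec_def by simp
  moreover have "z < 2^Suc k" using z(2) assms(1) unfolding info_set_def by auto
  ultimately have "z < 2^k"
  proof -
    assume b: "\<not> bit z k" and zl: "z < 2^Suc k"
    have "z div 2^k < 2" using zl by (simp add: less_mult_imp_div_less mult.commute)
    moreover have "even (z div 2^k)" using b by (simp add: bit_iff_odd)
    ultimately have "z div 2^k = 0" using less_2_cases_iff by fastforce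
    then show ?thesis by (simp add: div_eq_0_iff)
  qed
  then show "i \<in> I" using z index_avec[of k "Suc k" z] by simp
next
  assume "i \<in> I"
  moreover have "avec (Suc k) i (Suc k)" unfolding avec_def using bit_low_top[OF assms(2)] by simp
  moreover have "index_of k (avec (Suc k) i) = i" using index_avec[of k "Suc k" i] assms(2) by simp
  ultimately show "i \<in> sub_info (Suc k) I True" unfolding sub_info_def by force
qed

lemma sub_info_False:
  assumes "info_set (Suc k) I" "i < 2^k"
  shows "i \<in> sub_info (Suc k) I False \<longleftrightarrow> i + 2^k \<in> I"
proof
  assume "i \<in> sub_info (Suc k) I False"
  then obtain z where z: "i = index_of k (avec (Suc k) z)" "z \<in> I" "\<not> avec (Suc k) z (Suc k)"
    unfolding sub_info_def by auto
  have b: "bit z k" using z(3) unfolding avec_def by simp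
  have zl: "z < 2^Suc k" using z(2) assms(1) unfolding info_set_def by auto
  have "z \<ge> 2^k" using b bit_low_top[of z k] by (metis not_le)
  then have "z = z mod 2^k + 2^k" using zl by (simp add: le_mod_geq)
  then show "i + 2^k \<in> I" using z index_avec[of k "Suc k" z] by simp
next
  assume "i + 2^k \<in> I"
  moreover have "\<not> avec (Suc k) (i + 2^k) (Suc k)" unfolding avec_def using bit_shift_top[OF assms(2)] by simp
  moreover have "index_of k (avec (Suc k) (i + 2^k)) = i" using index_avec[of k "Suc k" "i + 2^k"] assms(2) by simp
  ultimately show "i \<in> sub_info (Suc k) I False" unfolding sub_info_def by force
qed

lemma mono_le_subset: "S \<subseteq> T \<Longrightarrow> mono_le S T"
  unfolding mono_le_def by blast

lemma decreasing_shift: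
  assumes "decreasing (Suc k) I" "i < 2^k" "i \<in> I"
  shows "i + 2^k \<in> I"
proof -
  have "supp (Suc k) (i + 2^k) \<subseteq> supp (Suc k) i"
  proof
    fix j assume "j \<in> supp (Suc k) (i + 2^k)"
    then have j: "j \<in> {1..Suc k}" "\<not> bit (i + 2^k) (j - 1)" unfolding supp_def avec_def by auto
    have "j \<noteq> Suc k" using j(2) bit_shift_top[OF assms(2)] by auto
    then have "j - 1 < k" using j(1) by auto
    then show "j \<in> supp (Suc k) i" using j bit_shift_low unfolding supp_def avec_def by auto
  qed
  moreover have "i + 2^k < 2^Suc k" using assms(2) by simp
  ultimately show ?thesis using assms(1,3) mono_le_subset unfolding decreasing_def by blast
qed



lemma half_sign:
  assumes dec: "\<forall>j<2^k. j \<in> I \<longrightarrow> j + 2^k \<in> I"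
    and Cr: "\<forall>j<2^k. sc_f C (r j) = w j \<and> \<bar>r j\<bar> < C"
    and sg: "\<forall>j<2^k. \<sigma> j < 2^k"
    and v: "\<forall>j<2^k. v j = C \<and> v (j + 2^k) = r (\<sigma> j)"
    and i: "i < 2^k"
  shows "SC k (Iup k I) (yup k I v) i = SC k I (\<lambda>j. w (\<sigma> j)) i"
proof -
  have L: "SC k I (ylow k v) = SC k I (\<lambda>j. w (\<sigma> j))"
    by (rule SC_cong) (use Cr sg v in \<open>auto simp: ylow_def\<close>)
  have sub: "\<forall>i<2^k. i \<in> I \<longrightarrow> i \<in> Iup k I" using dec unfolding Iup_def by simp
  have x: "\<forall>j<2^k. yup k I v j \<noteq> 0 \<and> (yup k I v j < 0 \<longleftrightarrow> SC k I (\<lambda>j. w (\<sigma> j)) j)"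
  proof (intro allI impI)
    fix j :: nat assume j: "j < 2^k"
    have e: "yup k I v j = sc_g (SC k I (\<lambda>j. w (\<sigma> j)) j) C (r (\<sigma> j))"
      unfolding yup_def L using v j by simp
    have "\<bar>r (\<sigma> j)\<bar> < C" using Cr sg j by blast
    then show "yup k I v j \<noteq> 0 \<and> (yup k I v j < 0 \<longleftrightarrow> SC k I (\<lambda>j. w (\<sigma> j)) j)"
      unfolding e sc_g_def by (cases "SC k I (\<lambda>j. w (\<sigma> j)) j") auto
  qed
  show ?thesis using sign_transfer[OF sub x i] .
qed

lemma second_half:
  assumes ut: "upper_triangular (Suc k) M"
    and H: "commutes_SC (Suc k) I (phi (Suc k) M)"
    and i: "i < 2^k"
  shows "SC k (Iup k I) (yup k I (perm_vec (2^Suc k) (phi (Suc k) M) y)) i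
       = SC k (Iup k I) (yup k I y) (phi k M i)"
proof -
  have i2: "i + 2^k < 2^Suc k" using i by simp
  have p: "phi (Suc k) M (i + 2^k) = phi k M i + 2^k" using phi_high[OF ut i] .
  have "SC (Suc k) I (perm_vec (2^Suc k) (phi (Suc k) M) y) (i + 2^k)
      = perm_vec (2^Suc k) (phi (Suc k) M) (SC (Suc k) I y) (i + 2^k)"
    using H unfolding commutes_SC_def by simp
  also have "\<dots> = SC (Suc k) I y (phi k M i + 2^k)" unfolding perm_vec_def using i2 p by simp
  also have "\<dots> = SC k (Iup k I) (yup k I y) (phi k M i)" using SC_decomp(2)[OF phi_lt] .
  finally show ?thesis using SC_decomp(2)[OF i] by simp
qed

lemma commutes_SC_I:
  assumes "\<And>z i. i < 2^k \<Longrightarrow> SC k J (perm_vec (2^k) p z) i = SC k J z (p i)"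
  shows "commutes_SC k J p"
  unfolding commutes_SC_def
proof (intro allI ext)
  fix z i
  show "SC k J (perm_vec (2^k) p z) i = perm_vec (2^k) p (SC k J z) i"
  proof (cases "i < 2^k")
    case True
    have "SC k J (perm_vec (2^k) p z) i = SC k J z (p i)" by (rule assms[OF True])
    then show ?thesis by (simp add: perm_vec_def True)
  next
    case False
    then show ?thesis by (simp add: perm_vec_def SC_ge)
  qed
qed

lemma part0:
  assumes ut: "upper_triangular (Suc k) M"
    and H: "commutes_SC (Suc k) I (phi (Suc k) M)"
    and inf: "info_set (Suc k) I"
  shows "commutes_SC k (sub_info (Suc k) I False) (phi k M)"
proof (rule commutes_SC_I)
  fix z :: "nat \<Rightarrow> real" and i :: nat assume i: "i < 2^k"
  let ?J = "Iup k I"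
  let ?p = "phi (Suc k) M"
  have J: "\<And>y. SC k (sub_info (Suc k) I False) y = SC k ?J y"
    by (rule SC_cong) (auto simp: sub_info_False[OF inf] Iup_def)
  define y where "y = (\<lambda>j. if j < 2^k then (0::real) else z (j - 2^k))"
  have zl: "\<And>v. (\<forall>j<2^k. v j = 0) \<Longrightarrow> \<not> SC k I (ylow k v) j"
  proof -
    fix v :: "nat \<Rightarrow> real" assume "\<forall>j<2^k. v j = 0"
    then have "SC k I (ylow k v) = SC k I (\<lambda>_. 0)"
      by (intro SC_cong) (auto simp: ylow_def sc_f_0)
    then show "\<not> SC k I (ylow k v) j" using SC_zero by metis
  qed
  have c1: "SC k ?J (yup k I y) = SC k ?J z"
  proof (rule SC_cong)
    have "\<forall>j<2^k. y j = 0" unfolding y_def by simp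
    then show "\<forall>j<2^k. yup k I y j = z j" using zl unfolding yup_def sc_g_def y_def by simp
  qed simp
  have c2: "SC k ?J (yup k I (perm_vec (2^Suc k) ?p y)) = SC k ?J (perm_vec (2^k) (phi k M) z)"
  proof (rule SC_cong)
    have a: "\<forall>j<2^k. perm_vec (2^Suc k) ?p y j = 0"
      unfolding perm_vec_def y_def using phi_low[OF ut] by auto
    have b: "\<And>j. j < 2^k \<Longrightarrow> perm_vec (2^Suc k) ?p y (j + 2^k) = z (phi k M j)"
      unfolding perm_vec_def y_def using phi_high[OF ut] phi_lt by auto
    show "\<forall>j<2^k. yup k I (perm_vec (2^Suc k) ?p y) j = perm_vec (2^k) (phi k M) z j"
      using zl[OF a] a b unfolding yup_def sc_g_def by (simp add: perm_vec_def)
  qed simp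
  have "SC k ?J (perm_vec (2^k) (phi k M) z) i = SC k ?J z (phi k M i)"
    using second_half[OF ut H i, of y] c1 c2 by simp
  then show "SC k (sub_info (Suc k) I False) (perm_vec (2^k) (phi k M) z) i
      = SC k (sub_info (Suc k) I False) z (phi k M i)" unfolding J .
qed

lemma part1:
  assumes ut: "upper_triangular (Suc k) M"
    and H: "commutes_SC (Suc k) I (phi (Suc k) M)"
    and inf: "info_set (Suc k) I"
    and dec: "decreasing (Suc k) I"
  shows "commutes_SC k (sub_info (Suc k) I True) (phi k M)"
proof (rule commutes_SC_I)
  fix w :: "nat \<Rightarrow> real" and i :: nat assume i: "i < 2^k"
  let ?J = "Iup k I"
  let ?p = "phi (Suc k) M"
  have J: "\<And>y. SC k (sub_info (Suc k) I True) y = SC k I y"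
    by (rule SC_cong) (auto simp: sub_info_True[OF inf])
  have dsh: "\<forall>j<2^k. j \<in> I \<longrightarrow> j + 2^k \<in> I" using decreasing_shift[OF dec] by blast
  obtain C r where Cr: "C > 0" "\<forall>j<2^k. sc_f C (r j) = w j \<and> \<bar>r j\<bar> < C" using inv_f by blast
  define y where "y = (\<lambda>j. if j < 2^k then C else r (j - 2^k))"
  have c1: "SC k ?J (yup k I y) (phi k M i) = SC k I (\<lambda>j. w j) (phi k M i)"
    by (rule half_sign[OF dsh Cr(2), of id, simplified]) (auto simp: y_def phi_lt)
  have c2: "SC k ?J (yup k I (perm_vec (2^Suc k) ?p y)) i = SC k I (\<lambda>j. w (phi k M j)) i"
  proof (rule half_sign[OF dsh Cr(2)])
    show "\<forall>j<2^k. phi k M j < 2^k" using phi_lt by blast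
    show "\<forall>j<2^k. perm_vec (2^Suc k) ?p y j = C \<and> perm_vec (2^Suc k) ?p y (j + 2^k) = r (phi k M j)"
      unfolding perm_vec_def y_def using phi_low[OF ut] phi_high[OF ut] phi_lt by auto
  qed (rule i)
  have c3: "SC k I (\<lambda>j. w (phi k M j)) = SC k I (perm_vec (2^k) (phi k M) w)"
    by (rule SC_cong) (auto simp: perm_vec_def)
  have "SC k I (perm_vec (2^k) (phi k M) w) i = SC k I w (phi k M i)"
    using second_half[OF ut H i, of y] c1 c2 c3 by simp
  then show "SC k (sub_info (Suc k) I True) (perm_vec (2^k) (phi k M) w) i
      = SC k (sub_info (Suc k) I True) w (phi k M i)" unfolding J .
qed

theorem lemma3:
  fixes m :: nat and I :: "nat set" and M :: "nat \<Rightarrow> nat \<Rightarrow> bool"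
  assumes "m \<ge> 1"
    and "info_set m I"
    and "decreasing m I"
    and "upper_triangular m M"
    and "is_automorphism (2^m) (phi m M) (code m I)"
    and "commutes_SC m I (phi m M)"
  shows "commutes_SC (m - 1) (sub_info m I True) (phi (m - 1) M)
       \<and> commutes_SC (m - 1) (sub_info m I False) (phi (m - 1) M)"
proof -
  obtain k where k: "m = Suc k" using assms(1) by (metis Suc_pred' less_eq_Suc_le Suc_le_eq One_nat_def)
  show ?thesis using part1[of k M I] part0[of k M I] assms unfolding k by simp
qed


end
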